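(* Let $n\ge \max\{m,p\}$, $A\in\mathbb{R}^{n\times n}$ symmetric positive definite, $B\in\mathbb{R}^{m\times n}$ of full row rank, $D\in\mathbb{R}^{m\times m}$ symmetric positive semidefinite, and $\widehat A\in\mathbb{R}^{n\times n}$, $\widehat S\in\mathbb{R}^{m\times m}$ symmetric positive definite. Set $\overline A=\widehat A^{-1/2}A\widehat A^{-1/2}$, $\overline D=\widehat S^{-1/2}D\widehat S^{-1/2}$, $R=\widehat S^{-1/2}B\widehat A^{-1/2}$, $\widetilde S=D+B\widehat A^{-1}B^T$, and define $\gamma^A_{\min/\max}=\lambda_{\min/\max}(\widehat A^{-1}A)$, $\gamma^S_{\max}=\lambda_{\max}(\widehat S^{-1}\widetilde S)$, $\gamma^D_{\max}=\lambda_{\max}(\widehat S^{-1}D)$, $\gamma^R_{\min}=\lambda_{\min}(RR^T)$. Assume $1\in[\gamma^A_{\min},\gamma^A_{\max}]$. Let $\zeta\in\mathbb{R}$ satisfy either $$0<\zeta<\min\left\{\gamma^A_{\min},\ \frac{\gamma^R_{\min}}{\gamma^A_{\max}+\gamma^R_{\min}+\gamma^D_{\max}}\right\}\quad\text{or}\quad \zeta\ge\gamma^A_{\max}+\gamma^S_{\max}.$$ Then all eigenvalues of the symmetric matrix $$Z(\zeta)=(1-\zeta)R(\zeta I-\overline A)^{-1}R^T-\overline D+\zeta I\in\mathbb{R}^{m\times m}$$ are either all positive or all negative.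
   Context: $\lambda_{\min}$, $\lambda_{\max}$ denote the smallest and largest eigenvalues (all matrices involved have real spectra). The assumption $1\in[\gamma^A_{\min},\gamma^A_{\max}]$ is a standing assumption of the paper's analysis. *)

theory Defs
  imports "HOL-Analysis.Analysis"
begin

definition sym_mat :: "real^'n^'n \<Rightarrow> bool" where
  "sym_mat M \<longleftrightarrow> transpose M = M"

definition pos_def_mat :: "real^'n^'n \<Rightarrow> bool" where
  "pos_def_mat M \<longleftrightarrow> sym_mat M \<and> (\<forall>x. x \<noteq> 0 \<longrightarrow> x \<bullet> (M *v x) > 0)"

definition pos_semidef_mat :: "real^'n^'n \<Rightarrow> bool" where
  "pos_semidef_mat M \<longleftrightarrow> sym_mat M \<and> (\<forall>x. x \<bullet> (M *v x) \<ge> 0)"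

definition mat_eigenvalue :: "real^'n^'n \<Rightarrow> real \<Rightarrow> bool" where
  "mat_eigenvalue M c \<longleftrightarrow> (\<exists>v. v \<noteq> 0 \<and> M *v v = c *\<^sub>R v)"

definition lambda_min :: "real^'n^'n \<Rightarrow> real" where
  "lambda_min M = Min {c. mat_eigenvalue M c}"

definition lambda_max :: "real^'n^'n \<Rightarrow> real" where
  "lambda_max M = Max {c. mat_eigenvalue M c}"

definition spd_sqrt :: "real^'n^'n \<Rightarrow> real^'n^'n" where
  "spd_sqrt M = (THE X. pos_def_mat X \<and> X ** X = M)"

definition inv_sqrt :: "real^'n^'n \<Rightarrow> real^'n^'n" where
  "inv_sqrt M = matrix_inv (spd_sqrt M)"

end

theory Submission
  imports Defs
begin


abbreviation qf :: "real^'n^'n \<Rightarrow> real^'n \<Rightarrow> real" where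
  "qf M x \<equiv> x \<bullet> (M *v x)"

lemma inner_mat_transpose: "x \<bullet> ((M::real^'n^'m) *v y) = (transpose M *v x) \<bullet> y"
  by (simp add: dot_lmul_matrix)

lemma sym_inner: "sym_mat M \<Longrightarrow> x \<bullet> (M *v y) = (M *v x) \<bullet> y"
  unfolding sym_mat_def using inner_mat_transpose[of x M y] by simp

lemma vec_eq_by_inner: "(\<And>y. (a::real^'n) \<bullet> y = b \<bullet> y) \<Longrightarrow> a = b"
proof -
  assume h: "\<And>y. (a::real^'n) \<bullet> y = b \<bullet> y"
  have "(a - b) \<bullet> (a - b) = 0" using h[of "a-b"] by (simp add: inner_diff_left)
  then show "a = b" by simp
qed

lemma sym_by_inner:
  assumes "\<And>x y. x \<bullet> (M *v y) = (M *v x) \<bullet> (y::real^'n)"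
  shows "sym_mat M"
proof -
  have "transpose M *v x = M *v x" for x
    by (rule vec_eq_by_inner) (metis assms inner_mat_transpose inner_commute)
  then show ?thesis unfolding sym_mat_def by (simp add: matrix_eq)
qed

lemma inv_facts:
  fixes P :: "real^'n^'n"
  assumes "invertible P"
  shows "P ** matrix_inv P = mat 1" "matrix_inv P ** P = mat 1"
proof -
  have "\<exists>A'. P ** A' = mat 1 \<and> A' ** P = mat 1" using assms unfolding invertible_def by blast
  then have "P ** matrix_inv P = mat 1 \<and> matrix_inv P ** P = mat 1"
    unfolding matrix_inv_def by (rule someI_ex)
  then show "P ** matrix_inv P = mat 1" "matrix_inv P ** P = mat 1" by auto
qed

lemma inv_unique:
  fixes P Q :: "real^'n^'n"
  assumes "Q ** P = mat 1"
  shows "matrix_inv P = Q"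
proof -
  have iP: "invertible P" using assms invertible_left_inverse by blast
  have "Q = Q ** (P ** matrix_inv P)" using inv_facts[OF iP] by simp
  also have "\<dots> = matrix_inv P" by (simp add: matrix_mul_assoc assms)
  finally show ?thesis by simp
qed

lemma inv_invertible: "invertible (P::real^'n^'n) \<Longrightarrow> invertible (matrix_inv P)"
  using inv_facts invertible_def by blast

lemma inv_inv: "invertible (P::real^'n^'n) \<Longrightarrow> matrix_inv (matrix_inv P) = P"
  by (meson inv_facts inv_unique)

lemma inv_mult: "invertible (P::real^'n^'n) \<Longrightarrow> invertible (Q::real^'n^'n) \<Longrightarrow> matrix_inv (P ** Q) = matrix_inv Q ** matrix_inv P"
proof -
  assume p: "invertible P" and q: "invertible Q"
  have "matrix_inv Q ** matrix_inv P ** (P ** Q) = matrix_inv Q ** (matrix_inv P ** P) ** Q"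
    by (simp only: matrix_mul_assoc)
  also have "\<dots> = mat 1" using inv_facts(2)[OF p] inv_facts(2)[OF q] by simp
  finally show ?thesis by (rule inv_unique)
qed

lemma inv_transpose: "invertible (P::real^'n^'n) \<Longrightarrow> matrix_inv (transpose P) = transpose (matrix_inv P)"
proof -
  assume p: "invertible P"
  have "transpose (matrix_inv P) ** transpose P = transpose (P ** matrix_inv P)"
    by (simp add: matrix_transpose_mul)
  also have "\<dots> = mat 1" by (simp add: inv_facts(1)[OF p])
  finally have "transpose (matrix_inv P) ** transpose P = mat 1" .
  then show ?thesis by (rule inv_unique)
qed

lemma inv_sym: "invertible (P::real^'n^'n) \<Longrightarrow> sym_mat P \<Longrightarrow> sym_mat (matrix_inv P)"
  unfolding sym_mat_def by (metis inv_transpose)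

lemma inj_invertible: "inj ((*v) (P::real^'n^'n)) \<Longrightarrow> invertible P"
  using invertible_left_inverse matrix_left_invertible_injective by blast

lemma pd_invertible: "pos_def_mat M \<Longrightarrow> invertible M"
proof (rule inj_invertible, rule injI)
  fix x y assume pd: "pos_def_mat M" and e: "M *v x = M *v y"
  have "M *v (x - y) = 0" using e by (simp add: matrix_vector_mult_diff_distrib)
  then have "\<not> (x - y) \<bullet> (M *v (x - y)) > 0" by simp
  then have "x - y = 0" using pd unfolding pos_def_mat_def by blast
  then show "x = y" by simp
qed

lemma invertible_nz: "invertible (P::real^'n^'n) \<Longrightarrow> x \<noteq> 0 \<Longrightarrow> P *v x \<noteq> 0"
  using inj_matrix_vector_mult[of P] unfolding inj_on_def by (metis matrix_vector_mult_0_right UNIV_I)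

lemma eig_sim1:
  fixes P Q M :: "real^'n^'n"
  assumes "Q ** P = mat 1" "mat_eigenvalue M c"
  shows "mat_eigenvalue (P ** M ** Q) c"
proof -
  obtain v where v: "v \<noteq> 0" "M *v v = c *\<^sub>R v" using assms(2) unfolding mat_eigenvalue_def by blast
  have "Q *v (P *v v) = v" using assms(1) by (simp add: matrix_vector_mul_assoc)
  then have "P *v v \<noteq> 0" using v by auto
  moreover have "(P ** M ** Q) *v (P *v v) = P *v (M *v (Q *v (P *v v)))"
    by (simp add: matrix_vector_mul_assoc matrix_mul_assoc)
  then have "(P ** M ** Q) *v (P *v v) = c *\<^sub>R (P *v v)"
    using \<open>Q *v (P *v v) = v\<close> v(2) by (simp add: matrix_vector_mult_scaleR)
  ultimately show ?thesis unfolding mat_eigenvalue_def by blast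
qed

lemma eig_sim:
  fixes P M :: "real^'n^'n"
  assumes "invertible P"
  shows "{c. mat_eigenvalue (P ** M ** matrix_inv P) c} = {c. mat_eigenvalue M c}"
proof -
  have 1: "matrix_inv P ** P = mat 1" "P ** matrix_inv P = mat 1" using inv_facts[OF assms] by auto
  have h1: "mat_eigenvalue M c" if "mat_eigenvalue (P ** M ** matrix_inv P) c" for c
  proof -
    have "mat_eigenvalue (matrix_inv P ** (P ** M ** matrix_inv P) ** P) c"
      by (rule eig_sim1[OF 1(2) that])
    also have "matrix_inv P ** (P ** M ** matrix_inv P) ** P = (matrix_inv P ** P) ** M ** (matrix_inv P ** P)"
      by (simp add: matrix_mul_assoc)
    also have "\<dots> = M" by (simp add: 1)
    finally show ?thesis .
  qed
  have h2: "mat_eigenvalue (P ** M ** matrix_inv P) c" if "mat_eigenvalue M c" for c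
    by (rule eig_sim1[OF 1(1) that])
  show ?thesis
    by (rule set_eqI) (auto intro: h1 h2)
qed



lemma quad_zero_lemma:
  fixes a b :: real
  assumes "\<And>t. 0 \<le> 2*t*a + t^2*b"
  shows "a = 0"
proof (rule ccontr)
  assume a: "a \<noteq> 0"
  define t where "t = -a/(\<bar>b\<bar>+1)"
  have pos: "\<bar>b\<bar>+1 > 0" by simp
  have "t^2*b \<le> t^2*\<bar>b\<bar>" by (simp add: mult_left_mono)
  also have "\<dots> = a^2*\<bar>b\<bar>/(\<bar>b\<bar>+1)^2" unfolding t_def by (simp add: power_divide)
  also have "\<dots> \<le> a^2/(\<bar>b\<bar>+1)"
  proof -
    have "a^2*\<bar>b\<bar> \<le> a^2*(\<bar>b\<bar>+1)" by (simp add: mult_left_mono)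
    then have "a^2*\<bar>b\<bar>/(\<bar>b\<bar>+1)^2 \<le> a^2*(\<bar>b\<bar>+1)/(\<bar>b\<bar>+1)^2"
      by (simp add: divide_right_mono)
    also have "\<dots> = a^2/(\<bar>b\<bar>+1)" by (simp add: power2_eq_square)
    finally show ?thesis .
  qed
  finally have 1: "t^2*b \<le> a^2/(\<bar>b\<bar>+1)" .
  have 2: "2*t*a = -2*a^2/(\<bar>b\<bar>+1)" unfolding t_def by (simp add: power2_eq_square)
  have "a^2 > 0" using a by simp
  then have "a^2/(\<bar>b\<bar>+1) > 0" using pos by simp
  then have "2*t*a + t^2*b < 0" using 1 2 by simp
  with assms[of t] show False by simp
qed

lemma qf_scale: "qf M (c *\<^sub>R x) = c^2 * qf M x"
  by (simp add: matrix_vector_mult_scaleR power2_eq_square)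

lemma qf_add_scale:
  assumes "sym_mat M"
  shows "qf M (u + t *\<^sub>R w) = qf M u + 2*t*(w \<bullet> (M *v u)) + t^2 * qf M w"
proof -
  have s: "u \<bullet> (M *v w) = w \<bullet> (M *v u)" using sym_inner[OF assms, of u w] by (simp add: inner_commute)
  show ?thesis
    by (simp add: matrix_vector_right_distrib matrix_vector_mult_scaleR inner_add_left inner_add_right
        s power2_eq_square algebra_simps)
qed

lemma cont_qf: "continuous_on S (\<lambda>x. qf M x)"
  by (intro continuous_intros)

lemma rayleigh_eig:
  fixes M :: "real^'n^'n" and W :: "(real^'n) set"
  assumes sym: "sym_mat M" and sub: "subspace W" and inv: "\<forall>w\<in>W. M *v w \<in> W" and ne: "W \<noteq> {0}"
  shows "\<exists>u\<in>W. norm u = 1 \<and> M *v u = qf M u *\<^sub>R u \<and> (\<forall>w\<in>W. qf M u * (w \<bullet> w) \<le> qf M w)"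
proof -
  define K where "K = sphere (0::real^'n) 1 \<inter> W"
  have cK: "compact K" unfolding K_def
    by (intro compact_Int_closed compact_sphere closed_subspace sub)
  obtain w0 where w0: "w0 \<in> W" "w0 \<noteq> 0" using ne sub subspace_0 by blast
  have "(1/norm w0) *\<^sub>R w0 \<in> K" unfolding K_def using w0 sub by (simp add: subspace_scale)
  then have neK: "K \<noteq> {}" by blast
  obtain u where u: "u \<in> K" and umin: "\<And>y. y \<in> K \<Longrightarrow> qf M u \<le> qf M y"
    using continuous_attains_inf[OF cK neK cont_qf] by blast
  define \<mu> where "\<mu> = qf M u"
  have uW: "u \<in> W" and nu: "norm u = 1" using u unfolding K_def by auto
  have uu: "u \<bullet> u = 1" using nu by (simp add: dot_square_norm)
  have bound: "\<mu> * (w \<bullet> w) \<le> qf M w" if w: "w \<in> W" for w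
  proof (cases "w = 0")
    case True then show ?thesis by simp
  next
    case False
    define w' where "w' = (1/norm w) *\<^sub>R w"
    have "w' \<in> K" unfolding K_def w'_def using w False sub by (simp add: subspace_scale)
    then have "\<mu> \<le> qf M w'" using umin \<mu>_def by simp
    also have "\<dots> = qf M w / (norm w)^2" unfolding w'_def qf_scale by (simp add: power_divide)
    finally have "\<mu> * (norm w)^2 \<le> qf M w" using False by (simp add: pos_le_divide_eq)
    then show ?thesis by (simp add: power2_norm_eq_inner)
  qed
  have orth: "w \<bullet> (M *v u - \<mu> *\<^sub>R u) = 0" if w: "w \<in> W" for w
  proof -
    have "0 \<le> 2*t*(w \<bullet> (M *v u - \<mu> *\<^sub>R u)) + t^2*(qf M w - \<mu> * (w \<bullet> w))" for t
    proof -
      have "u + t *\<^sub>R w \<in> W" using uW w sub by (simp add: subspace_add subspace_scale)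
      then have b: "\<mu> * ((u + t *\<^sub>R w) \<bullet> (u + t *\<^sub>R w)) \<le> qf M (u + t *\<^sub>R w)" by (rule bound)
      have e1: "(u + t *\<^sub>R w) \<bullet> (u + t *\<^sub>R w) = 1 + 2*t*(u \<bullet> w) + t^2*(w \<bullet> w)"
        using uu by (simp add: inner_add_left inner_add_right inner_commute power2_eq_square algebra_simps)
      have e2: "qf M (u + t *\<^sub>R w) = \<mu> + 2*t*(w \<bullet> (M *v u)) + t^2 * qf M w"
        using qf_add_scale[OF sym] \<mu>_def by simp
      show ?thesis using b unfolding e1 e2
        by (simp add: inner_diff_right inner_commute algebra_simps)
    qed
    then show ?thesis by (rule quad_zero_lemma)
  qed
  have "M *v u - \<mu> *\<^sub>R u \<in> W" using inv uW sub by (simp add: subspace_diff subspace_scale)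
  then have "(M *v u - \<mu> *\<^sub>R u) \<bullet> (M *v u - \<mu> *\<^sub>R u) = 0" by (rule orth)
  then have "M *v u = \<mu> *\<^sub>R u" by simp
  then show ?thesis using uW nu bound \<mu>_def by blast
qed

lemma rayleigh_eig_max:
  fixes M :: "real^'n^'n"
  assumes sym: "sym_mat M"
  shows "\<exists>u. norm u = 1 \<and> M *v u = qf M u *\<^sub>R u \<and> (\<forall>w. qf M w \<le> qf M u * (w \<bullet> w))"
proof -
  define K where "K = sphere (0::real^'n) 1"
  have cK: "compact K" unfolding K_def by simp
  have neK: "K \<noteq> {}" unfolding K_def by simp
  obtain u where u: "u \<in> K" and umax: "\<And>y. y \<in> K \<Longrightarrow> qf M y \<le> qf M u"
    using continuous_attains_sup[OF cK neK cont_qf] by blast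
  define \<mu> where "\<mu> = qf M u"
  have nu: "norm u = 1" using u unfolding K_def by auto
  have uu: "u \<bullet> u = 1" using nu by (simp add: dot_square_norm)
  have bound: "qf M w \<le> \<mu> * (w \<bullet> w)" for w
  proof (cases "w = 0")
    case True then show ?thesis by simp
  next
    case False
    define w' where "w' = (1/norm w) *\<^sub>R w"
    have "w' \<in> K" unfolding K_def w'_def using False by simp
    then have "qf M w' \<le> \<mu>" using umax \<mu>_def by simp
    moreover have "qf M w' = qf M w / (norm w)^2" unfolding w'_def qf_scale by (simp add: power_divide)
    ultimately have "qf M w \<le> \<mu> * (norm w)^2" using False by (simp add: pos_divide_le_eq)
    then show ?thesis by (simp add: power2_norm_eq_inner)
  qed
  have orth: "w \<bullet> (\<mu> *\<^sub>R u - M *v u) = 0" for w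
  proof -
    have "0 \<le> 2*t*(w \<bullet> (\<mu> *\<^sub>R u - M *v u)) + t^2*(\<mu> * (w \<bullet> w) - qf M w)" for t
    proof -
      have b: "qf M (u + t *\<^sub>R w) \<le> \<mu> * ((u + t *\<^sub>R w) \<bullet> (u + t *\<^sub>R w))" by (rule bound)
      have e1: "(u + t *\<^sub>R w) \<bullet> (u + t *\<^sub>R w) = 1 + 2*t*(u \<bullet> w) + t^2*(w \<bullet> w)"
        using uu by (simp add: inner_add_left inner_add_right inner_commute power2_eq_square algebra_simps)
      have e2: "qf M (u + t *\<^sub>R w) = \<mu> + 2*t*(w \<bullet> (M *v u)) + t^2 * qf M w"
        using qf_add_scale[OF sym] \<mu>_def by simp
      show ?thesis using b unfolding e1 e2
        by (simp add: inner_diff_right inner_commute algebra_simps)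
    qed
    then show ?thesis by (rule quad_zero_lemma)
  qed
  have "(\<mu> *\<^sub>R u - M *v u) \<bullet> (\<mu> *\<^sub>R u - M *v u) = 0" by (rule orth)
  then have "M *v u = \<mu> *\<^sub>R u" by simp
  then show ?thesis using nu bound \<mu>_def by blast
qed

lemma eig_finite:
  fixes M :: "real^'n^'n"
  assumes sym: "sym_mat M"
  shows "finite {c. mat_eigenvalue M c}"
proof -
  define E where "E = {c. mat_eigenvalue M c}"
  define v where "v c = (SOME v. v \<noteq> 0 \<and> M *v v = c *\<^sub>R v)" for c
  have v: "v c \<noteq> 0 \<and> M *v v c = c *\<^sub>R v c" if "c \<in> E" for c
  proof -
    have "\<exists>w. w \<noteq> 0 \<and> M *v w = c *\<^sub>R w" using that unfolding E_def mat_eigenvalue_def by simp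
    then show ?thesis unfolding v_def by (rule someI_ex)
  qed
  have inj: "inj_on v E"
  proof (rule inj_onI)
    fix a b assume a: "a \<in> E" and b: "b \<in> E" and e: "v a = v b"
    have "M *v v a = a *\<^sub>R v a" using v[OF a] by blast
    moreover have "M *v v a = b *\<^sub>R v a" using v[OF b] e by simp
    ultimately have "(a - b) *\<^sub>R v a = 0" by (simp add: scaleR_diff_left) blast
    then show "a = b" using v[OF a] by simp
  qed
  have orth2: "v a \<bullet> v b = 0" if a: "a \<in> E" and b: "b \<in> E" and ab: "a \<noteq> b" for a b
  proof -
    have "a * (v a \<bullet> v b) = (M *v v a) \<bullet> v b" using v[OF a] by simp
    also have "\<dots> = v a \<bullet> (M *v v b)" using sym_inner[OF sym] by simp
    also have "\<dots> = b * (v a \<bullet> v b)" using v[OF b] by simp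
    finally have "(a - b) * (v a \<bullet> v b) = 0" by (simp add: left_diff_distrib)
    then show ?thesis using ab by simp
  qed
  have po: "pairwise orthogonal (v ` E)"
    unfolding pairwise_def orthogonal_def using orth2 by (metis imageE)
  have "0 \<notin> v ` E" using v by auto
  then have "independent (v ` E)" using po by (rule pairwise_orthogonal_independent[rotated])
  then have "finite (v ` E)" by (rule independent_imp_finite)
  then have "finite E" by (rule finite_imageD[OF _ inj])
  then show ?thesis unfolding E_def .
qed

lemma eig_quad: "M *v v = c *\<^sub>R v \<Longrightarrow> qf M v = c * (v \<bullet> v)"
  by simp

lemma lmin_props:
  fixes M :: "real^'n^'n"
  assumes sym: "sym_mat M"
  shows "mat_eigenvalue M (lambda_min M)" "lambda_min M * (x \<bullet> x) \<le> qf M x"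
proof -
  have ne: "(UNIV::(real^'n) set) \<noteq> {0}"
  proof
    assume "(UNIV::(real^'n) set) = {0}"
    then have "axis undefined (1::real) = (0::real^'n)" by auto
    then show False by (simp add: axis_eq_0_iff)
  qed
  obtain u where u: "norm u = 1" "M *v u = qf M u *\<^sub>R u" "\<forall>w. qf M u * (w \<bullet> w) \<le> qf M w"
    using rayleigh_eig[OF sym subspace_UNIV _ ne] by auto
  have ev: "mat_eigenvalue M (qf M u)" unfolding mat_eigenvalue_def using u by (metis norm_zero zero_neq_one)
  have fin: "finite {c. mat_eigenvalue M c}" by (rule eig_finite[OF sym])
  have "lambda_min M \<in> {c. mat_eigenvalue M c}" unfolding lambda_min_def
    using fin ev by (intro Min_in) auto
  then show "mat_eigenvalue M (lambda_min M)" by simp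
  have "lambda_min M \<le> qf M u" unfolding lambda_min_def using fin ev by (simp add: Min_le)
  then have "lambda_min M * (x \<bullet> x) \<le> qf M u * (x \<bullet> x)" by (simp add: mult_right_mono)
  also have "\<dots> \<le> qf M x" using u by simp
  finally show "lambda_min M * (x \<bullet> x) \<le> qf M x" .
qed

lemma lmax_props:
  fixes M :: "real^'n^'n"
  assumes sym: "sym_mat M"
  shows "mat_eigenvalue M (lambda_max M)" "qf M x \<le> lambda_max M * (x \<bullet> x)"
proof -
  obtain u where u: "norm u = 1" "M *v u = qf M u *\<^sub>R u" "\<forall>w. qf M w \<le> qf M u * (w \<bullet> w)"
    using rayleigh_eig_max[OF sym] by auto
  have ev: "mat_eigenvalue M (qf M u)" unfolding mat_eigenvalue_def using u by (metis norm_zero zero_neq_one)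
  have fin: "finite {c. mat_eigenvalue M c}" by (rule eig_finite[OF sym])
  have "lambda_max M \<in> {c. mat_eigenvalue M c}" unfolding lambda_max_def
    using fin ev by (intro Max_in) auto
  then show "mat_eigenvalue M (lambda_max M)" by simp
  have "qf M u \<le> lambda_max M" unfolding lambda_max_def using fin ev by (simp add: Max_ge)
  then have "qf M u * (x \<bullet> x) \<le> lambda_max M * (x \<bullet> x)" by (simp add: mult_right_mono)
  moreover have "qf M x \<le> qf M u * (x \<bullet> x)" using u by simp
  ultimately show "qf M x \<le> lambda_max M * (x \<bullet> x)" by linarith
qed



definition onb_eig :: "real^'n^'n \<Rightarrow> (real^'n) set \<Rightarrow> bool" where
  "onb_eig M S \<longleftrightarrow> pairwise orthogonal S \<and> (\<forall>u\<in>S. norm u = 1 \<and> M *v u = qf M u *\<^sub>R u)"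

lemma onb_eig_indep: "onb_eig M S \<Longrightarrow> independent S"
  unfolding onb_eig_def
  by (metis norm_zero pairwise_orthogonal_independent zero_neq_one)

lemma onb_eig_fin: "onb_eig M S \<Longrightarrow> finite S \<and> card S \<le> DIM(real^'n)"
  for S :: "(real^'n) set"
  using onb_eig_indep independent_bound by blast

lemma spectral:
  fixes M :: "real^'n^'n"
  assumes sym: "sym_mat M"
  shows "\<exists>S. onb_eig M S \<and> finite S \<and> span S = UNIV"
proof -
  have "onb_eig M {}" unfolding onb_eig_def by simp
  moreover have "\<forall>S. onb_eig M S \<longrightarrow> card S < DIM(real^'n) + 1"
    using onb_eig_fin by fastforce
  ultimately obtain S where S: "onb_eig M S" and Smax: "\<And>T. onb_eig M T \<Longrightarrow> card T \<le> card S"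
    using ex_has_greatest_nat[of "onb_eig M" "{}" card "DIM(real^'n) + 1"] by blast
  have finS: "finite S" using onb_eig_fin[OF S] by simp
  have "span S = UNIV"
  proof (rule ccontr)
    assume ns: "span S \<noteq> UNIV"
    define W where "W = {x. \<forall>s\<in>S. s \<bullet> x = 0}"
    have sub: "subspace W" unfolding W_def subspace_def
      by (simp add: inner_add_right)
    have inv: "\<forall>w\<in>W. M *v w \<in> W"
    proof
      fix w assume w: "w \<in> W"
      have "s \<bullet> (M *v w) = 0" if s: "s \<in> S" for s
      proof -
        have "s \<bullet> (M *v w) = (M *v s) \<bullet> w" by (rule sym_inner[OF sym])
        also have "\<dots> = qf M s * (s \<bullet> w)"
        proof -
          have e: "M *v s = qf M s *\<^sub>R s" using S s unfolding onb_eig_def by blast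
          show ?thesis by (metis e inner_scaleR_left)
        qed
        also have "\<dots> = 0" using w s unfolding W_def by simp
        finally show ?thesis .
      qed
      then show "M *v w \<in> W" unfolding W_def by simp
    qed
    obtain a where a: "a \<noteq> 0" "\<forall>x\<in>span S. a \<bullet> x = 0" using span_not_UNIV_orthogonal[OF ns] by blast
    have "s \<bullet> a = 0" if "s \<in> S" for s
    proof -
      have "a \<bullet> s = 0" using a(2) span_base[OF that] by blast
      then show ?thesis by (simp only: inner_commute)
    qed
    then have "a \<in> W" unfolding W_def by simp
    then have ne: "W \<noteq> {0}" using a(1) by blast
    obtain u where u: "u \<in> W" "norm u = 1" "M *v u = qf M u *\<^sub>R u"
      using rayleigh_eig[OF sym sub inv ne] by blast
    have uS: "u \<notin> S"
    proof
      assume "u \<in> S"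
      then have "u \<bullet> u = 0" using u(1) unfolding W_def by simp
      then show False using u(2) by simp
    qed
    have us: "u \<bullet> s = 0 \<and> s \<bullet> u = 0" if "s \<in> S" for s
      using u(1) that unfolding W_def by (simp add: inner_commute)
    have "pairwise orthogonal (insert u S)"
      using S(1) us unfolding onb_eig_def pairwise_insert orthogonal_def by blast
    moreover have "\<forall>v\<in>insert u S. norm v = 1 \<and> M *v v = qf M v *\<^sub>R v"
      using S(1) u(2,3) unfolding onb_eig_def by blast
    ultimately have "onb_eig M (insert u S)" unfolding onb_eig_def by blast
    then have "card (insert u S) \<le> card S" by (rule Smax)
    then show False using uS finS by simp
  qed
  then show ?thesis using S finS by blast
qed

lemma onb_inner:
  assumes "onb_eig M S" "finite S" "s \<in> S"
  shows "s \<bullet> (\<Sum>u\<in>S. f u *\<^sub>R u) = f s"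
proof -
  have "s \<bullet> (\<Sum>u\<in>S. f u *\<^sub>R u) = (\<Sum>u\<in>S. f u * (s \<bullet> u))" by (simp add: inner_sum_right)
  also have "\<dots> = f s * (s \<bullet> s) + (\<Sum>u\<in>S-{s}. f u * (s \<bullet> u))"
    using assms by (simp add: sum.remove)
  also have "(\<Sum>u\<in>S-{s}. f u * (s \<bullet> u)) = 0"
  proof (rule sum.neutral, rule ballI)
    fix u assume "u \<in> S - {s}"
    then have "s \<bullet> u = 0" using assms unfolding onb_eig_def pairwise_def orthogonal_def by auto
    then show "f u * (s \<bullet> u) = 0" by simp
  qed
  also have "s \<bullet> s = 1" using assms unfolding onb_eig_def by (simp add: dot_square_norm)
  finally show ?thesis by simp
qed

lemma onb_expand:
  assumes "onb_eig M S" "finite S" "span S = UNIV"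
  shows "x = (\<Sum>u\<in>S. (u \<bullet> x) *\<^sub>R u)"
proof -
  define y where "y = x - (\<Sum>u\<in>S. (u \<bullet> x) *\<^sub>R u)"
  have "s \<bullet> y = 0" if "s \<in> S" for s
    unfolding y_def inner_diff_right using onb_inner[OF assms(1,2) that] by simp
  then have "orthogonal y y"
    using orthogonal_to_span[of y S y] assms(3) by (simp add: orthogonal_def inner_commute)
  then have "y = 0" by (simp add: orthogonal_def)
  then show ?thesis unfolding y_def by simp
qed

lemma spd_sqrt_props:
  fixes M :: "real^'n^'n"
  assumes pd: "pos_def_mat M"
  shows "pos_def_mat (spd_sqrt M)" "spd_sqrt M ** spd_sqrt M = M"
proof -
  have sym: "sym_mat M" using pd unfolding pos_def_mat_def by simp
  obtain S where S: "onb_eig M S" "finite S" "span S = UNIV" using spectral[OF sym] by blast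
  define l where "l u = qf M u" for u
  have eig: "M *v u = l u *\<^sub>R u" if "u \<in> S" for u using S(1) that unfolding onb_eig_def l_def by simp
  have lpos: "l u > 0" if "u \<in> S" for u
  proof -
    have "u \<noteq> 0" using S(1) that unfolding onb_eig_def by auto
    then show ?thesis using pd unfolding pos_def_mat_def l_def by simp
  qed
  define f where "f x = (\<Sum>u\<in>S. (sqrt (l u) * (u \<bullet> x)) *\<^sub>R u)" for x
  have lin: "linear f"
  proof (rule linearI)
    fix x y show "f (x + y) = f x + f y"
      unfolding f_def by (simp add: inner_add_right distrib_left scaleR_add_left sum.distrib)
  next
    fix c x show "f (c *\<^sub>R x) = c *\<^sub>R f x"
      unfolding f_def by (simp add: scaleR_sum_right mult_ac)
  qed
  define X where "X = matrix f"
  have Xf: "X *v x = f x" for x unfolding X_def using matrix_vector_mul(2)[OF lin] by metis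
  have uf: "u \<bullet> f x = sqrt (l u) * (u \<bullet> x)" if "u \<in> S" for u x
    unfolding f_def by (rule onb_inner[OF S(1,2) that])
  have exp: "x = (\<Sum>u\<in>S. (u \<bullet> x) *\<^sub>R u)" for x by (rule onb_expand[OF S])
  have Mx: "M *v x = (\<Sum>u\<in>S. (l u * (u \<bullet> x)) *\<^sub>R u)" for x
  proof -
    have "M *v x = M *v (\<Sum>u\<in>S. (u \<bullet> x) *\<^sub>R u)" by (rule arg_cong[where f="(*v) M", OF exp])
    also have "\<dots> = (\<Sum>u\<in>S. M *v ((u \<bullet> x) *\<^sub>R u))"
      by (rule linear_sum[OF matrix_vector_mul_linear])
    also have "\<dots> = (\<Sum>u\<in>S. (l u * (u \<bullet> x)) *\<^sub>R u)"
      by (rule sum.cong) (simp_all add: matrix_vector_mult_scaleR eig)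
    finally show ?thesis .
  qed
  have XX: "X ** X = M"
  proof (rule matrix_eq[THEN iffD2], rule allI)
    fix x
    have "(X ** X) *v x = f (f x)" by (simp add: matrix_vector_mul_assoc[symmetric] Xf)
    also have "\<dots> = (\<Sum>u\<in>S. (l u * (u \<bullet> x)) *\<^sub>R u)"
      unfolding f_def[of "f x"]
      by (rule sum.cong) (simp_all add: uf lpos less_imp_le mult.assoc[symmetric])
    also have "\<dots> = M *v x" by (simp add: Mx)
    finally show "(X ** X) *v x = M *v x" .
  qed
  have Xsym: "sym_mat X"
  proof (rule sym_by_inner)
    fix x y
    have "x \<bullet> (X *v y) = (\<Sum>u\<in>S. sqrt (l u) * (u \<bullet> y) * (x \<bullet> u))"
      unfolding Xf f_def by (simp add: inner_sum_right)
    also have "\<dots> = (\<Sum>u\<in>S. sqrt (l u) * (u \<bullet> x) * (u \<bullet> y))"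
      by (rule sum.cong) (simp_all add: inner_commute mult_ac)
    also have "\<dots> = (X *v x) \<bullet> y"
      unfolding Xf f_def by (simp add: inner_sum_left)
    finally show "x \<bullet> (X *v y) = (X *v x) \<bullet> y" .
  qed
  have Xpd: "pos_def_mat X"
    unfolding pos_def_mat_def
  proof (intro conjI Xsym allI impI)
    fix x :: "real^'n" assume x: "x \<noteq> 0"
    have e: "x \<bullet> (X *v x) = (\<Sum>u\<in>S. sqrt (l u) * (u \<bullet> x)^2)"
      unfolding Xf f_def by (simp add: inner_sum_right inner_commute power2_eq_square mult_ac)
    have nn: "\<forall>u\<in>S. 0 \<le> sqrt (l u) * (u \<bullet> x)^2" using lpos by (auto intro!: mult_nonneg_nonneg simp: less_imp_le)
    show "x \<bullet> (X *v x) > 0"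
    proof (rule ccontr)
      assume "\<not> x \<bullet> (X *v x) > 0"
      then have "(\<Sum>u\<in>S. sqrt (l u) * (u \<bullet> x)^2) = 0"
      proof -
        have "0 \<le> (\<Sum>u\<in>S. sqrt (l u) * (u \<bullet> x)^2)" by (rule sum_nonneg) (use nn in blast)
        then show ?thesis using e \<open>\<not> x \<bullet> (X *v x) > 0\<close> by linarith
      qed
      moreover have iff: "(\<Sum>u\<in>S. sqrt (l u) * (u \<bullet> x)^2) = 0 \<longleftrightarrow> (\<forall>u\<in>S. sqrt (l u) * (u \<bullet> x)^2 = 0)"
        by (rule sum_nonneg_eq_0_iff[OF S(2)]) (use nn in blast)
      ultimately have z: "\<forall>u\<in>S. sqrt (l u) * (u \<bullet> x)^2 = 0" by blast
      have z2: "u \<bullet> x = 0" if "u \<in> S" for u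
      proof -
        have "sqrt (l u) > 0" using lpos[OF that] by simp
        moreover have "sqrt (l u) * (u \<bullet> x)^2 = 0" using z that by blast
        ultimately have "(u \<bullet> x)^2 = 0" by simp
        then show ?thesis by simp
      qed
      have "(\<Sum>u\<in>S. (u \<bullet> x) *\<^sub>R u) = 0"
        by (rule sum.neutral) (simp add: z2)
      then have "x = 0" using exp[of x] by metis
      then show False using x by simp
    qed
  qed
  have uniq: "Y = X" if Y: "pos_def_mat Y \<and> Y ** Y = M" for Y
  proof -
    have Yu: "Y *v u = sqrt (l u) *\<^sub>R u" if u: "u \<in> S" for u
    proof -
      define c where "c = sqrt (l u)"
      define v where "v = Y *v u - c *\<^sub>R u"
      have "Y *v v + c *\<^sub>R v = (Y ** Y) *v u - (c*c) *\<^sub>R u"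
        unfolding v_def by (simp add: matrix_vector_mult_diff_distrib matrix_vector_mult_scaleR
            matrix_vector_mul_assoc[symmetric] algebra_simps)
      also have "\<dots> = 0" unfolding c_def using Y eig[OF u] lpos[OF u] by simp
      finally have "Y *v v = - c *\<^sub>R v" by (simp add: eq_neg_iff_add_eq_0)
      then have "v \<bullet> (Y *v v) = - c * (v \<bullet> v)" by simp
      moreover have "c \<ge> 0" unfolding c_def using lpos[OF u] by simp
      ultimately have "\<not> v \<bullet> (Y *v v) > 0" by (simp add: not_less)
      then have "v = 0" using Y unfolding pos_def_mat_def by blast
      then show ?thesis unfolding v_def c_def by (metis eq_iff_diff_eq_0)
    qed
    have "Y *v x = X *v x" for x
    proof -
      have "Y *v x = Y *v (\<Sum>u\<in>S. (u \<bullet> x) *\<^sub>R u)" by (rule arg_cong[where f="(*v) Y", OF exp])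
      also have "\<dots> = (\<Sum>u\<in>S. Y *v ((u \<bullet> x) *\<^sub>R u))"
        by (rule linear_sum[OF matrix_vector_mul_linear])
      also have "\<dots> = f x" unfolding f_def
        by (rule sum.cong[OF refl]) (simp add: matrix_vector_mult_scaleR Yu mult.commute)
      finally show ?thesis by (simp add: Xf)
    qed
    then show ?thesis by (simp add: matrix_eq)
  qed
  have "spd_sqrt M = X" unfolding spd_sqrt_def
    apply (rule the_equality)
    using Xpd XX apply blast
    using uniq by blast
  then show "pos_def_mat (spd_sqrt M)" "spd_sqrt M ** spd_sqrt M = M" using Xpd XX by auto
qed

lemma inv_sqrt_props:
  fixes M :: "real^'n^'n"
  assumes pd: "pos_def_mat M"
  shows "sym_mat (inv_sqrt M)" "invertible (inv_sqrt M)" "inv_sqrt M ** inv_sqrt M = matrix_inv M"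
proof -
  have X: "pos_def_mat (spd_sqrt M)" "spd_sqrt M ** spd_sqrt M = M" using spd_sqrt_props[OF pd] by auto
  have iX: "invertible (spd_sqrt M)" using pd_invertible X(1) by blast
  show "sym_mat (inv_sqrt M)" unfolding inv_sqrt_def
    using inv_sym[OF iX] X(1) unfolding pos_def_mat_def by blast
  show "invertible (inv_sqrt M)" unfolding inv_sqrt_def using inv_invertible[OF iX] .
  show "inv_sqrt M ** inv_sqrt M = matrix_inv M" unfolding inv_sqrt_def
    using inv_mult[OF iX iX] X(2) by simp
qed



lemma sym_add: "sym_mat X \<Longrightarrow> sym_mat Y \<Longrightarrow> sym_mat (X + Y)"
  by (rule sym_by_inner) (simp add: matrix_vector_mult_add_rdistrib inner_add_left inner_add_right sym_inner)

lemma sym_RRt: "sym_mat ((R::real^'n^'m) ** transpose R)"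
  unfolding sym_mat_def by (simp add: matrix_transpose_mul)

lemma sym_PMP: "sym_mat M \<Longrightarrow> sym_mat P \<Longrightarrow> sym_mat (P ** M ** P)"
  unfolding sym_mat_def by (simp add: matrix_transpose_mul matrix_mul_assoc)

lemma qf_RRt: "qf ((R::real^'n^'m) ** transpose R) z = (transpose R *v z) \<bullet> (transpose R *v z)"
  by (simp only: matrix_vector_mul_assoc[symmetric] inner_mat_transpose)

lemma qf_PMP: "sym_mat P \<Longrightarrow> qf (P ** M ** P) x = qf M (P *v x)"
  by (simp add: matrix_vector_mul_assoc[symmetric] sym_inner)

lemma lmin_nonneg: "sym_mat M \<Longrightarrow> (\<And>x. 0 \<le> qf M x) \<Longrightarrow> 0 \<le> lambda_min M"
proof -
  assume s: "sym_mat M" and p: "\<And>x. 0 \<le> qf M x"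
  obtain v where v: "v \<noteq> 0" "M *v v = lambda_min M *\<^sub>R v" using lmin_props(1)[OF s] unfolding mat_eigenvalue_def by blast
  have "qf M v = lambda_min M * (v \<bullet> v)" using v by simp
  then have "0 \<le> lambda_min M * (v \<bullet> v)" using p by metis
  moreover have "v \<bullet> v > 0" using v by simp
  ultimately show ?thesis by (simp add: zero_le_mult_iff)
qed

lemma lmax_nonneg: "sym_mat M \<Longrightarrow> (\<And>x. 0 \<le> qf M x) \<Longrightarrow> 0 \<le> lambda_max M"
proof -
  assume s: "sym_mat M" and p: "\<And>x. 0 \<le> qf M x"
  obtain v where v: "v \<noteq> 0" "M *v v = lambda_max M *\<^sub>R v" using lmax_props(1)[OF s] unfolding mat_eigenvalue_def by blast
  have "qf M v = lambda_max M * (v \<bullet> v)" using v by simp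
  then have "0 \<le> lambda_max M * (v \<bullet> v)" using p by metis
  moreover have "v \<bullet> v > 0" using v by simp
  ultimately show ?thesis by (simp add: zero_le_mult_iff)
qed

lemma discr_lemma:
  fixes A b C :: real
  assumes "\<And>t. 0 \<le> A + 2*t*b + t^2*C" "0 \<le> C"
  shows "b^2 \<le> A * C"
proof (cases "C = 0")
  case True
  have "0 \<le> 2*t*b + (A) " for t using assms(1)[of t] True by simp
  then have "0 \<le> 2*t*b + t^2*0 + A" for t by simp
  have "b = 0"
  proof (rule ccontr)
    assume "b \<noteq> 0"
    define t where "t = -(\<bar>A\<bar>+1)/b"
    have "2*t*b = -2*(\<bar>A\<bar>+1)" unfolding t_def using \<open>b \<noteq> 0\<close> by simp
    then show False using \<open>\<And>t. 0 \<le> 2*t*b + A\<close>[of t] abs_ge_minus_self[of A] abs_ge_self[of A] by (smt (verit))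
  qed
  then show ?thesis using True by simp
next
  case False
  then have C: "C > 0" using assms(2) by simp
  have "0 \<le> A + 2*(-b/C)*b + (-b/C)^2*C" by (rule assms(1))
  also have "\<dots> = A - b^2/C" using C by (simp add: power2_eq_square field_simps)
  finally have "b^2/C \<le> A" by simp
  then show ?thesis using C by (simp add: pos_divide_le_eq mult.commute)
qed

lemma cs_form:
  fixes N :: "real^'n^'n"
  assumes s: "sym_mat N" and p: "\<And>x. 0 \<le> qf N x"
  shows "(z \<bullet> (N *v x))^2 \<le> qf N x * qf N z"
proof -
  have "0 \<le> qf N x + 2*t*(z \<bullet> (N *v x)) + t^2 * qf N z" for t
    using p[of "x + t *\<^sub>R z"] qf_add_scale[OF s, of x t z] by simp
  then show ?thesis using discr_lemma p by blast
qed

lemma Nx_bound: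
  fixes N :: "real^'n^'n"
  assumes s: "sym_mat N" and p: "\<And>x. 0 \<le> qf N x" and c: "\<And>x. qf N x \<le> c * (x \<bullet> x)"
  shows "(N *v x) \<bullet> (N *v x) \<le> c * qf N x"
proof -
  define y where "y = N *v x"
  have "(y \<bullet> (N *v x))^2 \<le> qf N x * qf N y" by (rule cs_form[OF s p])
  also have "\<dots> \<le> qf N x * (c * (y \<bullet> y))" using p c by (simp add: mult_left_mono)
  finally have h: "(y \<bullet> y)^2 \<le> (c * qf N x) * (y \<bullet> y)" unfolding y_def by (simp add: mult_ac)
  show ?thesis
  proof (cases "y \<bullet> y = 0")
    case True
    have "0 \<le> c * qf N x"
    proof -
      have "0 \<le> qf N x" by (rule p)
      moreover have "0 \<le> c"
        using c[of "axis undefined 1"] p[of "axis undefined 1"] by (simp add: inner_axis_axis) 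
      ultimately show ?thesis by simp
    qed
    then show ?thesis using True unfolding y_def by simp
  next
    case False
    then have "y \<bullet> y > 0" by (simp add: order_less_le)
    then show ?thesis using h unfolding y_def power2_eq_square by (simp add: mult_le_cancel_right)
  qed
qed

lemma inv_bound_pos:
  fixes T :: "real^'n^'n"
  assumes s: "sym_mat T" and a: "a > 0" and lb: "\<And>x. a * (x \<bullet> x) \<le> qf T x"
  shows "invertible T" "0 \<le> qf (matrix_inv T) y" "qf (matrix_inv T) y \<le> (y \<bullet> y) / a"
proof -
  show iT: "invertible T"
  proof (rule inj_invertible, rule injI)
    fix x1 x2 assume "T *v x1 = T *v x2"
    then have "T *v (x1 - x2) = 0" by (simp add: matrix_vector_mult_diff_distrib)
    then have "a * ((x1 - x2) \<bullet> (x1 - x2)) \<le> 0" using lb[of "x1 - x2"] by simp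
    then have "(x1 - x2) \<bullet> (x1 - x2) \<le> 0" using a by (simp add: mult_le_0_iff)
    then have "(x1 - x2) \<bullet> (x1 - x2) = 0" by (meson antisym inner_ge_zero)
    then show "x1 = x2" by simp
  qed
  define x where "x = matrix_inv T *v y"
  have Tx: "T *v x = y" unfolding x_def using inv_facts(1)[OF iT] by (simp add: matrix_vector_mul_assoc)
  have e: "qf (matrix_inv T) y = qf T x"
  proof -
    have "qf (matrix_inv T) y = y \<bullet> x" unfolding x_def by simp
    also have "\<dots> = x \<bullet> (T *v x)" using Tx by (simp add: inner_commute)
    finally show ?thesis .
  qed
  have "0 \<le> a * (x \<bullet> x)" using a by simp
  then show "0 \<le> qf (matrix_inv T) y" using e lb[of x] by linarith
  have cs: "qf T x \<le> norm y * norm x" using Tx norm_cauchy_schwarz[of x y] by (simp add: mult.commute)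
  have xx: "x \<bullet> x = (norm x)^2" by (simp add: power2_norm_eq_inner)
  show "qf (matrix_inv T) y \<le> (y \<bullet> y) / a"
  proof (cases "x = 0")
    case True
    then show ?thesis using e a by simp
  next
    case False
    then have nx: "norm x > 0" by simp
    have "a * (norm x)^2 \<le> norm y * norm x" using lb[of x] cs unfolding xx by linarith
    then have "a * norm x \<le> norm y" using nx by (simp add: power2_eq_square mult.assoc[symmetric])
    then have "norm x \<le> norm y / a" using a by (simp add: pos_le_divide_eq mult.commute)
    then have "norm y * norm x \<le> norm y * (norm y / a)" by (rule mult_left_mono) simp
    also have "\<dots> = (y \<bullet> y) / a" by (simp add: power2_norm_eq_inner[symmetric] power2_eq_square)
    finally show ?thesis using e cs by linarith
  qed
qed

lemma inv_bound_neg: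
  fixes T :: "real^'n^'n"
  assumes s: "sym_mat T" and a: "a > 0" and ub: "\<And>x. qf T x \<le> - a * (x \<bullet> x)"
    and c: "\<And>x. - qf T x \<le> c * (x \<bullet> x)"
  shows "invertible T" "qf (matrix_inv T) y \<le> - (y \<bullet> y) / c"
proof -
  show iT: "invertible T"
  proof (rule inj_invertible, rule injI)
    fix x1 x2 assume "T *v x1 = T *v x2"
    then have "T *v (x1 - x2) = 0" by (simp add: matrix_vector_mult_diff_distrib)
    then have "0 \<le> - a * ((x1 - x2) \<bullet> (x1 - x2))" using ub[of "x1 - x2"] by simp
    then have "(x1 - x2) \<bullet> (x1 - x2) \<le> 0" using a by (simp add: mult_le_0_iff)
    then have "(x1 - x2) \<bullet> (x1 - x2) = 0" by (meson antisym inner_ge_zero)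
    then show "x1 = x2" by simp
  qed
  define N where "N = - T"
  have Nv: "N *v x = - (T *v x)" for x unfolding N_def
    by (simp add: matrix_vector_mult_def vec_eq_iff sum_negf)
  have qN: "qf N x = - qf T x" for x by (simp add: Nv)
  have sN: "sym_mat N" by (rule sym_by_inner) (simp add: Nv sym_inner[OF s])
  have pN: "0 \<le> qf N x" for x
  proof -
    have "0 \<le> a * (x \<bullet> x)" using a by simp
    then show ?thesis using ub[of x] qN[of x] by linarith
  qed
  have cN: "qf N x \<le> c * (x \<bullet> x)" for x using c qN by simp
  have cpos: "c > 0"
  proof -
    define e :: "real^'n" where "e = axis undefined 1"
    have ee: "e \<bullet> e = 1" unfolding e_def by (simp add: inner_axis_axis)
    have "a \<le> qf N e" using ub[of e] qN[of e] ee by simp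
    moreover have "qf N e \<le> c" using cN[of e] ee by simp
    ultimately show ?thesis using a by linarith
  qed
  define x where "x = matrix_inv T *v y"
  have Tx: "T *v x = y" unfolding x_def using inv_facts(1)[OF iT] by (simp add: matrix_vector_mul_assoc)
  have e: "qf (matrix_inv T) y = qf T x"
  proof -
    have "qf (matrix_inv T) y = y \<bullet> x" unfolding x_def by simp
    also have "\<dots> = x \<bullet> (T *v x)" using Tx by (simp add: inner_commute)
    finally show ?thesis .
  qed
  have "(N *v x) \<bullet> (N *v x) \<le> c * qf N x" by (rule Nx_bound[OF sN pN cN])
  then have "y \<bullet> y \<le> c * qf N x" using Tx by (simp add: Nv)
  then have "(y \<bullet> y) / c \<le> qf N x" using cpos by (simp add: pos_divide_le_eq mult.commute)
  then show "qf (matrix_inv T) y \<le> - (y \<bullet> y) / c" using e qN[of x] by simp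
qed



lemma eig_neg: "(\<And>z. z \<noteq> 0 \<Longrightarrow> qf Z z < 0) \<Longrightarrow> mat_eigenvalue Z c \<Longrightarrow> c < 0"
proof -
  assume h: "\<And>z. z \<noteq> 0 \<Longrightarrow> qf Z z < 0" and e: "mat_eigenvalue Z c"
  obtain v where v: "v \<noteq> 0" "Z *v v = c *\<^sub>R v" using e unfolding mat_eigenvalue_def by blast
  have "c * (v \<bullet> v) < 0" using h[OF v(1)] v(2) by simp
  moreover have "v \<bullet> v > 0" using v by simp
  ultimately show "c < 0" by (simp add: mult_less_0_iff)
qed

lemma eig_pos: "(\<And>z. z \<noteq> 0 \<Longrightarrow> qf Z z > 0) \<Longrightarrow> mat_eigenvalue Z c \<Longrightarrow> c > 0"
proof -
  assume h: "\<And>z. z \<noteq> 0 \<Longrightarrow> qf Z z > 0" and e: "mat_eigenvalue Z c"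
  obtain v where v: "v \<noteq> 0" "Z *v v = c *\<^sub>R v" using e unfolding mat_eigenvalue_def by blast
  have "c * (v \<bullet> v) > 0" using h[OF v(1)] v(2) by simp
  moreover have "v \<bullet> v > 0" using v by simp
  ultimately show "c > 0" by (simp add: zero_less_mult_iff)
qed

lemma core:
  fixes Abar :: "real^'n^'n" and R :: "real^'n^'m" and Dbar :: "real^'m^'m" and \<zeta> :: real
  assumes sA: "sym_mat Abar" and sD: "sym_mat Dbar" and pD: "\<And>z. 0 \<le> qf Dbar z"
    and injR: "inj ((*v) (transpose R))"
    and g1: "lambda_min Abar \<le> 1" and g2: "1 \<le> lambda_max Abar"
    and hz: "(0 < \<zeta> \<and> \<zeta> < lambda_min Abar \<and> \<zeta> < lambda_min (R ** transpose R)
               / (lambda_max Abar + lambda_min (R ** transpose R) + lambda_max Dbar))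
           \<or> \<zeta> \<ge> lambda_max Abar + lambda_max (Dbar + R ** transpose R)"
  shows "(\<forall>c. mat_eigenvalue ((1 - \<zeta>) *\<^sub>R (R ** matrix_inv (\<zeta> *\<^sub>R mat 1 - Abar) ** transpose R)
              - Dbar + \<zeta> *\<^sub>R mat 1) c \<longrightarrow> c > 0)
       \<or> (\<forall>c. mat_eigenvalue ((1 - \<zeta>) *\<^sub>R (R ** matrix_inv (\<zeta> *\<^sub>R mat 1 - Abar) ** transpose R)
              - Dbar + \<zeta> *\<^sub>R mat 1) c \<longrightarrow> c < 0)"
proof -
  define T where "T = \<zeta> *\<^sub>R mat 1 - Abar"
  define G where "G = matrix_inv T"
  define Rt where "Rt = transpose R"
  define Z where "Z = (1 - \<zeta>) *\<^sub>R (R ** G ** Rt) - Dbar + \<zeta> *\<^sub>R mat 1"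
  define gmin where "gmin = lambda_min Abar"
  define gmax where "gmax = lambda_max Abar"
  define gR where "gR = lambda_min (R ** Rt)"
  define gD where "gD = lambda_max Dbar"
  define gS where "gS = lambda_max (Dbar + R ** Rt)"
  have Tv: "T *v x = \<zeta> *\<^sub>R x - Abar *v x" for x
    unfolding T_def by (simp add: matrix_vector_mult_diff_rdistrib scaleR_matrix_vector_assoc[symmetric])
  have qT: "qf T x = \<zeta> * (x \<bullet> x) - qf Abar x" for x by (simp add: Tv inner_diff_right)
  have sT: "sym_mat T" by (rule sym_by_inner) (simp add: Tv inner_diff_right inner_diff_left sym_inner[OF sA])
  have Zv: "Z *v z = (1 - \<zeta>) *\<^sub>R (R *v (G *v (Rt *v z))) - Dbar *v z + \<zeta> *\<^sub>R z" for z
    unfolding Z_def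
    by (simp add: matrix_vector_mult_diff_rdistrib matrix_vector_mult_add_rdistrib
        scaleR_matrix_vector_assoc[symmetric] matrix_vector_mul_assoc matrix_mul_assoc)
  have qZ: "qf Z z = (1 - \<zeta>) * qf G (Rt *v z) - qf Dbar z + \<zeta> * (z \<bullet> z)" for z
  proof -
    have "z \<bullet> (R *v (G *v (Rt *v z))) = qf G (Rt *v z)"
      unfolding Rt_def by (rule inner_mat_transpose)
    then show ?thesis by (simp add: Zv inner_diff_right inner_add_right)
  qed
  have bmin: "gmin * (x \<bullet> x) \<le> qf Abar x" for x unfolding gmin_def by (rule lmin_props(2)[OF sA])
  have bmax: "qf Abar x \<le> gmax * (x \<bullet> x)" for x unfolding gmax_def by (rule lmax_props(2)[OF sA])
  have sRR: "sym_mat (R ** Rt)" unfolding Rt_def by (rule sym_RRt)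
  have qRR: "qf (R ** Rt) z = (Rt *v z) \<bullet> (Rt *v z)" for z unfolding Rt_def by (rule qf_RRt)
  have gR0: "0 \<le> gR" unfolding gR_def by (rule lmin_nonneg[OF sRR]) (simp add: qRR)
  have bR: "gR * (z \<bullet> z) \<le> (Rt *v z) \<bullet> (Rt *v z)" for z
    unfolding gR_def using lmin_props(2)[OF sRR, of z] qRR by simp
  have gD0: "0 \<le> gD" unfolding gD_def by (rule lmax_nonneg[OF sD pD])
  have Zdef: "(1 - \<zeta>) *\<^sub>R (R ** matrix_inv (\<zeta> *\<^sub>R mat 1 - Abar) ** transpose R) - Dbar + \<zeta> *\<^sub>R mat 1 = Z"
    unfolding Z_def G_def T_def Rt_def ..
  from hz show ?thesis
  proof
    assume h: "0 < \<zeta> \<and> \<zeta> < lambda_min Abar \<and> \<zeta> < lambda_min (R ** transpose R)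
               / (lambda_max Abar + lambda_min (R ** transpose R) + lambda_max Dbar)"
    then have z0: "0 < \<zeta>" and z1: "\<zeta> < gmin" and z2: "\<zeta> < gR / (gmax + gR + gD)"
      unfolding gmin_def gR_def gmax_def gD_def Rt_def by auto
    define a where "a = gmin - \<zeta>"
    define c where "c = gmax - \<zeta>"
    have a0: "a > 0" unfolding a_def using z1 by simp
    have c0: "c > 0" unfolding c_def using z1 g1 g2 gmin_def gmax_def by simp
    have ub: "qf T x \<le> - a * (x \<bullet> x)" for x using qT[of x] bmin[of x] unfolding a_def by (simp add: algebra_simps)
    have cb: "- qf T x \<le> c * (x \<bullet> x)" for x using qT[of x] bmax[of x] unfolding c_def by (simp add: algebra_simps)
    have qG: "qf G y \<le> - (y \<bullet> y) / c" for y unfolding G_def by (rule inv_bound_neg(2)[OF sT a0 ub cb])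
    have den: "gmax + gR + gD > 0" using g2 gR0 gD0 gmax_def by simp
    have "\<zeta> * (gmax + gR + gD) < gR" using z2 den by (simp add: pos_less_divide_eq)
    then have "\<zeta> * gmax + \<zeta> * gR < gR" using z0 gD0 by (simp add: algebra_simps) (smt (verit) mult_nonneg_nonneg)
    then have key: "\<zeta> * c < (1 - \<zeta>) * gR" unfolding c_def using z0 by (simp add: algebra_simps) (smt (verit) mult_pos_pos)
    have z1': "\<zeta> < 1" using z1 g1 gmin_def by simp
    have neg: "qf Z z < 0" if nz: "z \<noteq> 0" for z
    proof -
      define w where "w = z \<bullet> z"
      define y where "y = Rt *v z"
      have w0: "w > 0" unfolding w_def using nz by simp
      have "(1 - \<zeta>) * qf G y \<le> (1 - \<zeta>) * (- (y \<bullet> y) / c)"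
        by (rule mult_left_mono) (use qG[of y] z1' in auto)
      also have "\<dots> = - ((1 - \<zeta>) * (y \<bullet> y)) / c" by simp
      also have "\<dots> \<le> - ((1 - \<zeta>) * (gR * w)) / c"
        using bR[of z] z1' c0 unfolding y_def w_def by (simp add: divide_right_mono mult_left_mono)
      finally have A: "(1 - \<zeta>) * qf G y \<le> - ((1 - \<zeta>) * (gR * w)) / c" .
      have "\<zeta> * w * c < (1 - \<zeta>) * gR * w" using key w0 by (simp add: mult.commute mult.left_commute)
      then have B: "\<zeta> * w < ((1 - \<zeta>) * (gR * w)) / c" using c0 by (simp add: pos_less_divide_eq mult_ac)
      have "qf Z z = (1 - \<zeta>) * qf G y - qf Dbar z + \<zeta> * w" unfolding y_def w_def by (rule qZ)
      then show ?thesis using A B pD[of z] by linarith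
    qed
    show ?thesis unfolding Zdef using eig_neg[OF neg] by blast
  next
    assume h: "\<zeta> \<ge> lambda_max Abar + lambda_max (Dbar + R ** transpose R)"
    then have hz2: "\<zeta> \<ge> gmax + gS" unfolding gmax_def gS_def Rt_def by simp
    have sDR: "sym_mat (Dbar + R ** Rt)" by (rule sym_add[OF sD sRR])
    have qDR: "qf (Dbar + R ** Rt) z = qf Dbar z + (Rt *v z) \<bullet> (Rt *v z)" for z
      using qRR[of z] by (simp add: matrix_vector_mult_add_rdistrib inner_add_right)
    have bS: "qf (Dbar + R ** Rt) z \<le> gS * (z \<bullet> z)" for z unfolding gS_def by (rule lmax_props(2)[OF sDR])
    have gS0: "gS > 0"
    proof -
      define e :: "real^'m" where "e = axis undefined 1"
      have ee: "e \<bullet> e = 1" unfolding e_def by (simp add: inner_axis_axis)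
      have "e \<noteq> 0" unfolding e_def by simp
      then have "Rt *v e \<noteq> 0" using injR unfolding Rt_def inj_on_def
        by (metis UNIV_I matrix_vector_mult_0_right)
      then have "(Rt *v e) \<bullet> (Rt *v e) > 0" by simp
      then have "qf (Dbar + R ** Rt) e > 0" using qDR[of e] pD[of e] by linarith
      then show ?thesis using bS[of e] ee by simp
    qed
    define a where "a = \<zeta> - gmax"
    have a0: "a > 0" unfolding a_def using hz2 gS0 by simp
    have lb: "a * (x \<bullet> x) \<le> qf T x" for x using qT[of x] bmax[of x] unfolding a_def by (simp add: algebra_simps)
    have qG: "qf G y \<le> (y \<bullet> y) / a" for y unfolding G_def by (rule inv_bound_pos(3)[OF sT a0 lb])
    have z1: "\<zeta> \<ge> 1" using hz2 gS0 g2 gmax_def by simp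
    define k where "k = (\<zeta> - 1) / a"
    have k1: "k \<ge> 1" unfolding k_def using a0 g2 gmax_def by (simp add: a_def)
    have keyA: "\<zeta> * a > (\<zeta> - 1) * gS"
    proof -
      have "\<zeta> * a \<ge> \<zeta> * gS" unfolding a_def using hz2 z1 by (simp add: mult_left_mono)
      then show ?thesis using gS0 by (simp add: algebra_simps)
    qed
    then have key: "\<zeta> > k * gS" unfolding k_def using a0
      by (simp add: pos_divide_less_eq mult.commute mult.left_commute)
    have pos: "qf Z z > 0" if nz: "z \<noteq> 0" for z
    proof -
      define w where "w = z \<bullet> z"
      define y where "y = Rt *v z"
      have w0: "w > 0" unfolding w_def using nz by simp
      have "(\<zeta> - 1) * qf G y \<le> (\<zeta> - 1) * ((y \<bullet> y) / a)"
        by (rule mult_left_mono) (use qG[of y] z1 in auto)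
      also have "\<dots> = k * (y \<bullet> y)" unfolding k_def by simp
      finally have A: "(1 - \<zeta>) * qf G y \<ge> - (k * (y \<bullet> y))" by (simp add: algebra_simps)
      have "qf Dbar z \<le> k * qf Dbar z" using k1 pD[of z] by (simp add: mult_le_cancel_right1)
      then have "qf Dbar z + k * (y \<bullet> y) \<le> k * qf (Dbar + R ** Rt) z"
        unfolding qDR y_def by (simp add: algebra_simps)
      also have "\<dots> \<le> k * (gS * w)" unfolding w_def using bS[of z] k1 by (simp add: mult_left_mono)
      finally have B: "qf Dbar z + k * (y \<bullet> y) \<le> k * gS * w" by (simp add: mult_ac)
      have C: "k * gS * w < \<zeta> * w" using key w0 by simp
      have "qf Z z = (1 - \<zeta>) * qf G y - qf Dbar z + \<zeta> * w" unfolding y_def w_def by (rule qZ)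
      then show ?thesis using A B C by linarith
    qed
    show ?thesis unfolding Zdef using eig_pos[OF pos] by blast
  qed
qed



lemma matrix_add_rdistrib': "((A::real^'n^'m) + B) ** (C::real^'p^'n) = A ** C + B ** C"
  by (simp add: matrix_eq matrix_vector_mul_assoc[symmetric] matrix_vector_mult_add_rdistrib)

theorem lemma3:
  fixes A Ahat :: "real^'n^'n" and B :: "real^'n^'m" and D Shat :: "real^'m^'m"
    and \<zeta> :: real
  assumes "CARD('m) \<le> CARD('n)"
    and "pos_def_mat A"
    and "rank B = CARD('m)"
    and "pos_semidef_mat D"
    and "pos_def_mat Ahat" and "pos_def_mat Shat"
    and "1 \<ge> lambda_min (matrix_inv Ahat ** A)"
    and "1 \<le> lambda_max (matrix_inv Ahat ** A)"
    and "(0 < \<zeta> \<and> \<zeta> < lambda_min (matrix_inv Ahat ** A)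
          \<and> \<zeta> < lambda_min ((inv_sqrt Shat ** B ** inv_sqrt Ahat) ** transpose (inv_sqrt Shat ** B ** inv_sqrt Ahat))
             / (lambda_max (matrix_inv Ahat ** A)
                + lambda_min ((inv_sqrt Shat ** B ** inv_sqrt Ahat) ** transpose (inv_sqrt Shat ** B ** inv_sqrt Ahat))
                + lambda_max (matrix_inv Shat ** D)))
        \<or> \<zeta> \<ge> lambda_max (matrix_inv Ahat ** A)
               + lambda_max (matrix_inv Shat ** (D + B ** matrix_inv Ahat ** transpose B))"
  shows "(\<forall>c. mat_eigenvalue
              ((1 - \<zeta>) *\<^sub>R ((inv_sqrt Shat ** B ** inv_sqrt Ahat)
                 ** matrix_inv (\<zeta> *\<^sub>R mat 1 - inv_sqrt Ahat ** A ** inv_sqrt Ahat)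
                 ** transpose (inv_sqrt Shat ** B ** inv_sqrt Ahat))
               - inv_sqrt Shat ** D ** inv_sqrt Shat + \<zeta> *\<^sub>R mat 1) c \<longrightarrow> c > 0)
       \<or> (\<forall>c. mat_eigenvalue
              ((1 - \<zeta>) *\<^sub>R ((inv_sqrt Shat ** B ** inv_sqrt Ahat)
                 ** matrix_inv (\<zeta> *\<^sub>R mat 1 - inv_sqrt Ahat ** A ** inv_sqrt Ahat)
                 ** transpose (inv_sqrt Shat ** B ** inv_sqrt Ahat))
               - inv_sqrt Shat ** D ** inv_sqrt Shat + \<zeta> *\<^sub>R mat 1) c \<longrightarrow> c < 0)"
proof -
  note pdA = assms(2) and rB = assms(3) and psD = assms(4) and pdAh = assms(5) and pdSh = assms(6)
  define K where "K = inv_sqrt Ahat"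
  define L where "L = inv_sqrt Shat"
  have sK: "sym_mat K" and iK: "invertible K" and KK: "K ** K = matrix_inv Ahat"
    using inv_sqrt_props[OF pdAh] unfolding K_def by auto
  have sL: "sym_mat L" and iL: "invertible L" and LL: "L ** L = matrix_inv Shat"
    using inv_sqrt_props[OF pdSh] unfolding L_def by auto
  have tK: "transpose K = K" and tL: "transpose L = L" using sK sL unfolding sym_mat_def by auto
  define Abar where "Abar = K ** A ** K"
  define Dbar where "Dbar = L ** D ** L"
  define R where "R = L ** B ** K"
  have sA: "sym_mat Abar" unfolding Abar_def
    by (rule sym_PMP[OF _ sK]) (use pdA in \<open>simp add: pos_def_mat_def\<close>)
  have sD: "sym_mat Dbar" unfolding Dbar_def
    by (rule sym_PMP[OF _ sL]) (use psD in \<open>simp add: pos_semidef_mat_def\<close>)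
  have pD: "0 \<le> qf Dbar z" for z
    unfolding Dbar_def qf_PMP[OF sL] using psD unfolding pos_semidef_mat_def by blast
  have tR: "transpose R = K ** transpose B ** L"
    unfolding R_def by (simp add: matrix_transpose_mul tK tL matrix_mul_assoc)
  have injBt: "inj ((*v) (transpose B))"
    using full_rank_injective[of "transpose B"] rB rank_transpose[of B] by simp
  have injR: "inj ((*v) (transpose R))"
  proof -
    have "(*v) (transpose R) = (*v) K \<circ> (*v) (transpose B) \<circ> (*v) L"
      unfolding tR by (rule ext) (simp add: matrix_vector_mul_assoc matrix_mul_assoc)
    moreover have "inj ((*v) K)" "inj ((*v) L)" using inj_matrix_vector_mult iK iL by auto
    ultimately show ?thesis using injBt by (simp add: inj_compose)
  qed
  have KiK: "K ** matrix_inv K = mat 1" and LiL: "L ** matrix_inv L = mat 1"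
    using inv_facts(1)[OF iK] inv_facts(1)[OF iL] by auto
  have E1: "matrix_inv Ahat ** A = K ** Abar ** matrix_inv K"
  proof -
    have "K ** Abar ** matrix_inv K = (K ** K) ** A ** (K ** matrix_inv K)"
      unfolding Abar_def by (simp only: matrix_mul_assoc)
    then show ?thesis using KK KiK by simp
  qed
  have E2: "matrix_inv Shat ** D = L ** Dbar ** matrix_inv L"
  proof -
    have "L ** Dbar ** matrix_inv L = (L ** L) ** D ** (L ** matrix_inv L)"
      unfolding Dbar_def by (simp only: matrix_mul_assoc)
    then show ?thesis using LL LiL by simp
  qed
  have E3: "matrix_inv Shat ** (D + B ** matrix_inv Ahat ** transpose B) = L ** (Dbar + R ** transpose R) ** matrix_inv L"
  proof -
    have "Dbar + R ** transpose R = L ** (D + B ** matrix_inv Ahat ** transpose B) ** L"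
      unfolding Dbar_def R_def KK[symmetric]
      by (simp add: tR[unfolded R_def] matrix_add_ldistrib matrix_add_rdistrib' matrix_mul_assoc)
    then have "L ** (Dbar + R ** transpose R) ** matrix_inv L
        = (L ** L) ** (D + B ** matrix_inv Ahat ** transpose B) ** (L ** matrix_inv L)"
      by (simp only: matrix_mul_assoc)
    then show ?thesis using LL LiL by simp
  qed
  have l1: "lambda_min (matrix_inv Ahat ** A) = lambda_min Abar"
    unfolding lambda_min_def E1 eig_sim[OF iK] ..
  have l2: "lambda_max (matrix_inv Ahat ** A) = lambda_max Abar"
    unfolding lambda_max_def E1 eig_sim[OF iK] ..
  have l3: "lambda_max (matrix_inv Shat ** D) = lambda_max Dbar"
    unfolding lambda_max_def E2 eig_sim[OF iL] ..
  have l4: "lambda_max (matrix_inv Shat ** (D + B ** matrix_inv Ahat ** transpose B)) = lambda_max (Dbar + R ** transpose R)"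
    unfolding lambda_max_def E3 eig_sim[OF iL] ..
  have g1: "lambda_min Abar \<le> 1" using assms(7) l1 by simp
  have g2: "1 \<le> lambda_max Abar" using assms(8) l2 by simp
  have hz: "(0 < \<zeta> \<and> \<zeta> < lambda_min Abar \<and> \<zeta> < lambda_min (R ** transpose R)
               / (lambda_max Abar + lambda_min (R ** transpose R) + lambda_max Dbar))
           \<or> \<zeta> \<ge> lambda_max Abar + lambda_max (Dbar + R ** transpose R)"
    using assms(9) unfolding l1 l2 l3 l4 R_def[symmetric] K_def[symmetric] L_def[symmetric] .
  show ?thesis
    using core[OF sA sD pD injR g1 g2 hz]
    unfolding Abar_def Dbar_def R_def K_def L_def .
qed

end
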